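(* Let $\Gamma = \{(x,y) \in \mathbb{R}^2 : y^2 = x^3 - x^2,\ x \neq 0\} \cup \{O\} \subset \mathbb{RP}^2$, where $O$ is the point at infinity lying on all lines parallel to the $y$-axis (and on the line at infinity). Define $\phi : \mathbb{R}/\mathbb{Z} \to \Gamma$ by $\phi(0) = O$ and, for $x \neq 0$, $\phi(x) = \left(\cot(\pi x)^2 + 1,\ \cot(\pi x)(\cot(\pi x)^2 + 1)\right)$. Then $\phi$ is a well-defined bijection, and for any three distinct elements $x, y, z \in \mathbb{R}/\mathbb{Z}$, the points $\phi(x), \phi(y), \phi(z)$ are collinear in $\mathbb{RP}^2$ if and only if $x + y + z = 0$ in $\mathbb{R}/\mathbb{Z}$. *)

theory Defs
  imports Complex_Main
begin

text \<open>Points of the real projective plane relevant here: an affine point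
  Some (x,y) = [x : y : 1], and None = O = [0 : 1 : 0], the point at infinity
  in the direction of the y-axis.\<close>
type_synonym pt = "(real \<times> real) option"

definition hom :: "pt \<Rightarrow> real \<times> real \<times> real" where
  "hom P = (case P of None \<Rightarrow> (0, 1, 0) | Some (x, y) \<Rightarrow> (x, y, 1))"

definition det3 :: "real \<times> real \<times> real \<Rightarrow> real \<times> real \<times> real \<Rightarrow> real \<times> real \<times> real \<Rightarrow> real" where
  "det3 u v w = (case u of (a1, a2, a3) \<Rightarrow> case v of (b1, b2, b3) \<Rightarrow> case w of (c1, c2, c3) \<Rightarrow>
      a1 * (b2 * c3 - b3 * c2) - a2 * (b1 * c3 - b3 * c1) + a3 * (b1 * c2 - b2 * c1))"

definition collinear_proj :: "pt \<Rightarrow> pt \<Rightarrow> pt \<Rightarrow> bool" where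
  "collinear_proj P Q R \<longleftrightarrow> det3 (hom P) (hom Q) (hom R) = 0"

definition Gamma :: "pt set" where
  "Gamma = {Some (x, y) | x y. y\<^sup>2 = x ^ 3 - x\<^sup>2 \<and> x \<noteq> 0} \<union> {None}"

text \<open>phi on representatives x in R of R/Z.\<close>
definition phi :: "real \<Rightarrow> pt" where
  "phi x = (if x \<in> \<int> then None
            else Some ((cot (pi * x))\<^sup>2 + 1, cot (pi * x) * ((cot (pi * x))\<^sup>2 + 1)))"

end

theory Submission
  imports Defs
begin

lemma sinpi: "sin (pi * x) = 0 \<longleftrightarrow> x \<in> \<int>"
  using sin_times_pi_eq_0[of x] by (simp add: mult.commute)

lemma cot_eq:
  assumes "x \<notin> \<int>" "y \<notin> \<int>"
  shows "cot (pi * x) = cot (pi * y) \<longleftrightarrow> x - y \<in> \<int>"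
proof -
  have sx: "sin (pi * x) \<noteq> 0" and sy: "sin (pi * y) \<noteq> 0" using assms sinpi by auto
  have "cot (pi * x) = cot (pi * y) \<longleftrightarrow> sin (pi*x) * cos (pi*y) - cos (pi*x) * sin (pi*y) = 0"
    using sx sy by (auto simp: cot_def field_simps)
  also have "\<dots> \<longleftrightarrow> sin (pi * (x - y)) = 0"
    by (simp add: right_diff_distrib sin_diff)
  finally show ?thesis using sinpi by simp
qed

lemma sin_sum3:
  assumes "sin a \<noteq> 0" "sin b \<noteq> 0" "sin c \<noteq> 0"
  shows "sin (a + b + c) = sin a * sin b * sin c *
     (cot a * cot b + cot b * cot c + cot a * cot c - 1)"
  using assms by (simp add: cot_def sin_add cos_add field_simps)

lemma det_aff:
  "det3 (hom (Some (a\<^sup>2+1, a*(a\<^sup>2+1)))) (hom (Some (b\<^sup>2+1, b*(b\<^sup>2+1)))) (hom (Some (c\<^sup>2+1, c*(c\<^sup>2+1))))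
   = (a-b)*(b-c)*(c-a)*(a*b+b*c+c*a-1)"
  by (simp add: det3_def hom_def) (simp add: algebra_simps power2_eq_square)

lemma det_O:
  "det3 (hom (Some p)) (hom (Some q)) (hom None) = fst q - fst p"
  by (cases p, cases q) (simp add: det3_def hom_def)

lemma det3_cyc: "det3 u v w = det3 v w u"
  by (cases u rule: prod_cases3, cases v rule: prod_cases3, cases w rule: prod_cases3)
     (simp add: det3_def algebra_simps)

lemma col_cyc: "collinear_proj P Q R \<longleftrightarrow> collinear_proj Q R P"
  unfolding collinear_proj_def using det3_cyc by metis

lemma phi_some: "x \<notin> \<int> \<Longrightarrow> phi x = Some ((cot (pi * x))\<^sup>2 + 1, cot (pi * x) * ((cot (pi * x))\<^sup>2 + 1))"
  by (simp add: phi_def)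

lemma cot_neg: "cot (- t) = - cot t"
  by (simp add: cot_def)

lemma main_z:
  assumes z: "z \<in> \<int>" and x: "x \<notin> \<int>" and y: "y \<notin> \<int>" and xy: "x - y \<notin> \<int>"
  shows "collinear_proj (phi x) (phi y) (phi z) \<longleftrightarrow> x + y + z \<in> \<int>"
proof -
  define a where "a = cot (pi * x)"
  define b where "b = cot (pi * y)"
  have ny: "- y \<notin> \<int>" using y by (metis Ints_minus minus_minus)
  have "collinear_proj (phi x) (phi y) (phi z) \<longleftrightarrow> a\<^sup>2 = b\<^sup>2"
    using z x y by (simp add: collinear_proj_def phi_some det_O a_def b_def) (auto simp: phi_def det_O)
  also have "\<dots> \<longleftrightarrow> a = b \<or> a = - b" by (simp add: power2_eq_iff)
  also have "\<dots> \<longleftrightarrow> a = - b" using cot_eq[OF x y] xy a_def b_def by auto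
  also have "\<dots> \<longleftrightarrow> x - (- y) \<in> \<int>" using cot_eq[OF x ny] a_def b_def cot_neg[of "pi*y"] by simp
  also have "\<dots> \<longleftrightarrow> x + y + z \<in> \<int>"
  proof
    assume "x - (- y) \<in> \<int>" then show "x + y + z \<in> \<int>" using z by (simp add: Ints_add)
  next
    assume "x + y + z \<in> \<int>" then have "x + y + z - z \<in> \<int>" using z by (simp add: Ints_diff)
    then show "x - (- y) \<in> \<int>" by simp
  qed
  finally show ?thesis .
qed

lemma main_none:
  assumes x: "x \<notin> \<int>" and y: "y \<notin> \<int>" and z: "z \<notin> \<int>"
    and xy: "x - y \<notin> \<int>" and yz: "y - z \<notin> \<int>" and xz: "x - z \<notin> \<int>"
  shows "collinear_proj (phi x) (phi y) (phi z) \<longleftrightarrow> x + y + z \<in> \<int>"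
proof -
  define a where "a = cot (pi * x)"
  define b where "b = cot (pi * y)"
  define c where "c = cot (pi * z)"
  have ab: "a \<noteq> b" using cot_eq[OF x y] xy a_def b_def by auto
  have bc: "b \<noteq> c" using cot_eq[OF y z] yz c_def b_def by auto
  have ac: "c \<noteq> a" using cot_eq[OF x z] xz a_def c_def by auto
  have "collinear_proj (phi x) (phi y) (phi z) \<longleftrightarrow> (a-b)*(b-c)*(c-a)*(a*b+b*c+c*a-1) = 0"
    using x y z by (simp add: collinear_proj_def phi_some det_aff a_def b_def c_def del: mult_eq_0_iff)
  also have "\<dots> \<longleftrightarrow> a*b+b*c+a*c-1 = 0" using ab bc ac by (simp add: mult.commute[of c a])
  also have "\<dots> \<longleftrightarrow> sin (pi*x + pi*y + pi*z) = 0"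
    using sin_sum3[of "pi*x" "pi*y" "pi*z"] x y z sinpi a_def b_def c_def by auto
  also have "\<dots> \<longleftrightarrow> x + y + z \<in> \<int>" using sinpi[of "x+y+z"] by (simp add: distrib_left)
  finally show ?thesis .
qed

lemma part1: assumes h: "x - y \<in> \<int>" shows "phi x = phi y"
  proof (cases "x \<in> \<int>")
    case True
    then have "x - (x - y) \<in> \<int>" using h by (rule Ints_diff)
    then have "y \<in> \<int>" by simp
    then show ?thesis using True by (simp add: phi_def)
  next
    case False
    have ny: "y \<notin> \<int>"
    proof
      assume "y \<in> \<int>" then have "(x - y) + y \<in> \<int>" using h by (simp add: Ints_add)
      then show False using False by simp
    qed
    have "cot (pi*x) = cot (pi*y)" using cot_eq[OF False ny] h by simp
    then show ?thesis using False ny by (simp add: phi_def)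
  qed

lemma part2: assumes h: "phi x = phi y" shows "x - y \<in> \<int>"
  proof (cases "x \<in> \<int>")
    case True
    then have "y \<in> \<int>" using h by (auto simp: phi_def split: if_splits)
    then show ?thesis using True by (simp add: Ints_diff)
  next
    case False
    then have ny: "y \<notin> \<int>" using h by (auto simp: phi_def split: if_splits)
    define a where "a = cot (pi * x)"
    define b where "b = cot (pi * y)"
    have pa: "b\<^sup>2 + 1 \<noteq> 0" using zero_le_power2[of b] by linarith
    have eq: "Some (a\<^sup>2 + 1, a * (a\<^sup>2 + 1)) = Some (b\<^sup>2 + 1, b * (b\<^sup>2 + 1))"
      using h phi_some[OF False] phi_some[OF ny] unfolding a_def b_def by metis
    then have e: "a\<^sup>2 + 1 = b\<^sup>2 + 1 \<and> a * (a\<^sup>2 + 1) = b * (b\<^sup>2 + 1)"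
      by (rule prod.inject[THEN iffD1, OF option.inject[THEN iffD1]])
    note e1 = conjunct1[OF e] and e2 = conjunct2[OF e]
    have "a * (b\<^sup>2 + 1) = b * (b\<^sup>2 + 1)" using e1 e2 by metis
    then have "a = b" using pa by simp
    then show ?thesis using cot_eq[OF False ny] a_def b_def by simp
  qed

lemma part3a: "range phi \<subseteq> Gamma"
    proof
      fix P assume "P \<in> range phi"
      then obtain x where P: "P = phi x" by auto
      show "P \<in> Gamma"
      proof (cases "x \<in> \<int>")
        case True then show ?thesis using P by (simp add: phi_def Gamma_def)
      next
        case False
        define t where "t = cot (pi * x)"
        have "(t * (t\<^sup>2 + 1))\<^sup>2 = (t\<^sup>2 + 1) ^ 3 - (t\<^sup>2 + 1)\<^sup>2"
          by (simp add: algebra_simps power2_eq_square power3_eq_cube)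
        moreover have "t\<^sup>2 + 1 \<noteq> 0" using zero_le_power2[of t] by linarith
        moreover have "P = Some (t\<^sup>2 + 1, t * (t\<^sup>2 + 1))" using P False by (simp add: phi_def t_def)
        ultimately show ?thesis unfolding Gamma_def by blast
      qed
    qed

lemma part3b: "Gamma \<subseteq> range phi"
    proof
      fix P assume "P \<in> Gamma"
      then consider "P = None" | X Y where "P = Some (X, Y)" "Y\<^sup>2 = X ^ 3 - X\<^sup>2" "X \<noteq> 0"
        unfolding Gamma_def by auto
      then show "P \<in> range phi"
      proof cases
        case 1
        have "phi 0 = None" by (simp add: phi_def)
        then show ?thesis using 1 by (metis rangeI)
      next
        case 2
        define t where "t = Y / X"
        define x where "x = 1/2 - arctan t / pi"
        have a1: "- (pi/2) < arctan t" "arctan t < pi/2" using arctan_bounded by auto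
        have x0: "0 < x" "x < 1" using a1 pi_gt_zero unfolding x_def by (auto simp: field_simps)
        have nx: "x \<notin> \<int>"
        proof
          assume "x \<in> \<int>" then obtain k :: int where "x = of_int k" by (auto elim: Ints_cases)
          then show False using x0 by auto
        qed
        have "pi * x = pi/2 - arctan t" unfolding x_def by (simp add: field_simps)
        then have ct: "cot (pi * x) = t"
          by (simp add: cot_def sin_diff cos_diff) (metis tan_arctan tan_def)
        have "Y\<^sup>2 / X\<^sup>2 = X - 1" using 2 by (simp add: field_simps power2_eq_square power3_eq_cube)
        then have X: "t\<^sup>2 + 1 = X" unfolding t_def by (simp add: power_divide)
        have Y: "t * X = Y" using 2 unfolding t_def by simp
        have "phi x = P" using nx 2 ct X Y by (simp add: phi_def)
        then show ?thesis by (metis rangeI)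
      qed
    qed

lemma part4:
  assumes xy: "x - y \<notin> \<int>" and yz: "y - z \<notin> \<int>" and xz: "x - z \<notin> \<int>"
  shows "collinear_proj (phi x) (phi y) (phi z) \<longleftrightarrow> x + y + z \<in> \<int>"
proof -
  have sw: "b - a \<notin> \<int>" if ab: "a - b \<notin> \<int>" for a b :: real
  proof
    assume "b - a \<in> \<int>"
    then have "- (b - a) \<in> \<int>" by (simp only: Ints_minus)
    then show False using ab by simp
  qed
  have ii: "\<And>a b. a \<in> \<int> \<Longrightarrow> b \<in> \<int> \<Longrightarrow> a - b \<in> \<int>" by (simp add: Ints_diff)
  show ?thesis
  proof (cases "z \<in> \<int>")
    case True
    have nx: "x \<notin> \<int>" using ii xz True by blast
    have ny: "y \<notin> \<int>" using ii yz True by blast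
    show ?thesis using main_z[OF True nx ny xy] .
  next
    case nz: False
    show ?thesis
    proof (cases "x \<in> \<int>")
      case True
      have ny: "y \<notin> \<int>" using ii xy True by blast
      have 1: "collinear_proj (phi y) (phi z) (phi x) \<longleftrightarrow> y + z + x \<in> \<int>"
        using main_z[OF True ny nz yz] .
      have 2: "y + z + x = x + y + z" by simp
      show ?thesis using 1 unfolding 2 col_cyc[of "phi x"] .
    next
      case nx: False
      show ?thesis
      proof (cases "y \<in> \<int>")
        case True
        have 1: "collinear_proj (phi z) (phi x) (phi y) \<longleftrightarrow> z + x + y \<in> \<int>"
          using main_z[OF True nz nx sw[OF xz]] .
        have 2: "z + x + y = x + y + z" by simp
        show ?thesis using 1 unfolding 2 col_cyc[of "phi z"] .
      next
        case False
        show ?thesis using main_none[OF nx False nz xy yz xz] .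
      qed
    qed
  qed
qed

theorem proposition4:
  shows "(\<forall>x y. x - y \<in> \<int> \<longrightarrow> phi x = phi y)
       \<and> (\<forall>x y. phi x = phi y \<longrightarrow> x - y \<in> \<int>)
       \<and> range phi = Gamma
       \<and> (\<forall>x y z. x - y \<notin> \<int> \<and> y - z \<notin> \<int> \<and> x - z \<notin> \<int> \<longrightarrow>
            (collinear_proj (phi x) (phi y) (phi z) \<longleftrightarrow> x + y + z \<in> \<int>))"
  using part1 part2 part3a part3b part4 by blast

end
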